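(* Let $\mathbb{K}$ be a field of characteristic zero and let $V$ be a four-dimensional $\mathbb{K}$-vector space with basis $\{e_1,e_2,e_3,e_4\}$. For $s\in\mathbb{K}$ let $\mathfrak{A}_s=(V,\mu_s)$ be the anti-commutative algebra whose only nonzero products of basis elements (up to anti-commutativity) are $$\mu_s(e_1,e_3)=e_1,\quad \mu_s(e_1,e_4)=s e_2,\quad \mu_s(e_2,e_3)=s e_2.$$ Let $t\in\mathbb{K}$ with $t\neq 0,1$. Then $$\phi_{4,t}(\mathfrak{A}_s)=\begin{cases}6, & s=0,\\ 1, & s=t,\\ 0, & \text{otherwise,}\end{cases}$$ and consequently, for $t_1,t_2\in\mathbb{K}\setminus\{0,1\}$, the functions $\phi_{4,t_1}$ and $\phi_{4,t_2}$ are equal if and only if $t_1=t_2$.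
   Context: All algebras are finite dimensional over a field $\mathbb{K}$ of characteristic zero. An anti-commutative algebra is a vector space $V$ with a bilinear map $\mu:V\times V\to V$ satisfying $\mu(X,Y)=-\mu(Y,X)$. For constants $\alpha,\beta,\gamma\in\mathbb{K}$, an $(\alpha,\beta,\gamma)$-derivation of $(V,\mu)$ is a linear map $D:V\to V$ with $\alpha D\mu(X,Y)=\beta\mu(DX,Y)+\gamma\mu(X,DY)$ for all $X,Y\in V$; the space of these is denoted $\mathcal{D}(\alpha,\beta,\gamma)(V,\mu)$. Let $C^2(V;V)$ be the space of antisymmetric bilinear maps $V\times V\to V$ and $n=\dim V$. For $t\in\mathbb{K}$, $\phi_{n,t}:C^2(V;V)\to\{0,1,\dots,n^2\}$ is defined by $\phi_{n,t}(\mu)=\dim\mathcal{D}(t,1,0)(V,\mu)$; we write $\phi_{n,t}(\mathfrak{A})$ for $\phi_{n,t}(\mu)$ when $\mathfrak{A}=(V,\mu)$. *)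

theory Defs
  imports "HOL-Analysis.Analysis" "HOL-Library.Function_Algebras"
begin

text \<open>The ambient vector space V is 'a^'n (coordinates w.r.t. a fixed basis) over a
field 'a of characteristic zero; dim V = CARD('n).  Linear maps V \<Rightarrow> V form a
K-vector space under pointwise operations; fscale is the scalar multiplication.\<close>

definition fscale :: "'a::field \<Rightarrow> ('b \<Rightarrow> 'a^'n) \<Rightarrow> ('b \<Rightarrow> 'a^'n)" where
  "fscale c f = (\<lambda>x. c *s f x)"

interpretation fvs: vector_space "fscale :: 'a::field \<Rightarrow> ('b \<Rightarrow> 'a^'n) \<Rightarrow> ('b \<Rightarrow> 'a^'n)"
  by unfold_locales (auto simp: fscale_def fun_eq_iff vec.scale_right_distrib
      vec.scale_left_distrib)

definition lin :: "('a::field^'n \<Rightarrow> 'a^'m) \<Rightarrow> bool" where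
  "lin f = Vector_Spaces.linear (*s) (*s) f"

text \<open>Bilinear maps V \<times> V \<Rightarrow> V.\<close>
definition bilin :: "('a::field^'n \<Rightarrow> 'a^'n \<Rightarrow> 'a^'n) \<Rightarrow> bool" where
  "bilin \<mu> = ((\<forall>x. lin (\<mu> x)) \<and> (\<forall>y. lin (\<lambda>x. \<mu> x y)))"

text \<open>C^2(V;V): antisymmetric bilinear maps.\<close>
definition C2 :: "('a::field^'n \<Rightarrow> 'a^'n \<Rightarrow> 'a^'n) set" where
  "C2 = {\<mu>. bilin \<mu> \<and> (\<forall>X Y. \<mu> X Y = - \<mu> Y X)}"

text \<open>(alpha,beta,gamma)-derivations.\<close>
definition derivs :: "'a::field \<Rightarrow> 'a \<Rightarrow> 'a \<Rightarrow> ('a^'n \<Rightarrow> 'a^'n \<Rightarrow> 'a^'n)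
    \<Rightarrow> ('a^'n \<Rightarrow> 'a^'n) set" where
  "derivs \<alpha> \<beta> \<gamma> \<mu> = {D. lin D \<and>
     (\<forall>X Y. \<alpha> *s D (\<mu> X Y) = \<beta> *s \<mu> (D X) Y + \<gamma> *s \<mu> X (D Y))}"

text \<open>phi_{n,t}(mu) = dim D(t,1,0)(V,mu), with n = CARD('n).\<close>
definition phi :: "'a::field \<Rightarrow> ('a^'n \<Rightarrow> 'a^'n \<Rightarrow> 'a^'n) \<Rightarrow> nat" where
  "phi t \<mu> = fvs.dim (derivs t 1 0 \<mu>)"

text \<open>Basis e_1,e_2,e_3,e_4 of 'a^4 is axis 1, axis 2, axis 3, axis 4 (index 4 = 0 in type 4).
mu_s(e1,e3)=e1, mu_s(e1,e4)=s e2, mu_s(e2,e3)=s e2, extended bilinearly and antisymmetrically.\<close>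
definition muA :: "'a::field \<Rightarrow> 'a^4 \<Rightarrow> 'a^4 \<Rightarrow> 'a^4" where
  "muA s X Y =
     (X$1 * Y$3 - X$3 * Y$1) *s axis 1 1
   + (s * (X$1 * Y$4 - X$4 * Y$1)) *s axis 2 1
   + (s * (X$2 * Y$3 - X$3 * Y$2)) *s axis 2 1"

end

theory Submission
  imports Defs
begin

lemma DX4: assumes "lin (D :: 'a::field^4 \<Rightarrow> 'a^4)"
  shows "D X $ i = X$1 * D (axis 1 1) $ i + X$2 * D (axis 2 1) $ i + X$3 * D (axis 3 1) $ i + X$4 * D (axis 4 1) $ i"
  using linear_componentwise[of D X i] assms unfolding lin_def sum_4 by simp

lemma exhaust_6:
  fixes x :: 6
  shows "x = 1 \<or> x = 2 \<or> x = 3 \<or> x = 4 \<or> x = 5 \<or> x = 6"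
proof (induct x)
  case (of_int z)
  then have "z = 0 \<or> z = 1 \<or> z = 2 \<or> z = 3 \<or> z = 4 \<or> z = 5" by fastforce
  then show ?case by auto
qed

lemma forall_6: "(\<forall>i::6. P i) \<longleftrightarrow> P 1 \<and> P 2 \<and> P 3 \<and> P 4 \<and> P 5 \<and> P 6"
  by (metis exhaust_6)

lemma exhaust_1': "(x::1) = 1" by simp

interpretation p1: finite_dimensional_vector_space_pair_1 "(*s) :: 'a::field \<Rightarrow> 'a^'m \<Rightarrow> 'a^'m"
  cart_basis "fscale :: 'a \<Rightarrow> ('b \<Rightarrow> 'a^'n) \<Rightarrow> ('b \<Rightarrow> 'a^'n)"
  by unfold_locales

definition L0 :: "'a::field^6 \<Rightarrow> 'a^4 \<Rightarrow> 'a^4" where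
  "L0 c X = (c$1 * X$2 + c$2 * X$3 + c$3 * X$4) *s axis 2 1 + (c$4 * X$2 + c$5 * X$3 + c$6 * X$4) *s axis 4 1"

definition L1 :: "'a::field^1 \<Rightarrow> 'a^4 \<Rightarrow> 'a^4" where
  "L1 c X = (c$1 * X$1) *s axis 2 1 + (c$1 * X$3) *s axis 4 1"

lemma fdim_range:
  assumes "Vector_Spaces.linear (*s) fscale (L :: 'a::field^'m \<Rightarrow> 'a^'n \<Rightarrow> 'a^'n)" "inj L"
  shows "fvs.dim (range L) = CARD('m)"
proof -
  have "fvs.dim (range L) = vec.dim (UNIV :: ('a^'m) set)"
    using p1.dim_image_eq[OF assms(1)] assms(2) by (simp add: inj_on_def inj_def)
  then show ?thesis by (simp add: card_cart_basis)
qed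

lemma lin_fscale: "Vector_Spaces.linear (*s) fscale L \<longleftrightarrow>
   (\<forall>x y. L (x + y) = L x + L y) \<and> (\<forall>c x. L (c *s x) = fscale c (L x))"
  using Vector_Spaces.linear_iff[of "(*s)" fscale L] vec.vector_space_axioms fvs.vector_space_axioms
  by blast

lemma L0_lin: "Vector_Spaces.linear (*s) fscale (L0 :: 'a::field^6 \<Rightarrow> 'a^4 \<Rightarrow> 'a^4)"
  unfolding lin_fscale
  by (auto simp: L0_def fscale_def fun_eq_iff vec_eq_iff algebra_simps)

lemma L1_lin: "Vector_Spaces.linear (*s) fscale (L1 :: 'a::field^1 \<Rightarrow> 'a^4 \<Rightarrow> 'a^4)"
  unfolding lin_fscale
  by (auto simp: L1_def fscale_def fun_eq_iff vec_eq_iff algebra_simps)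

lemma L0_inj: "inj (L0 :: 'a::field^6 \<Rightarrow> 'a^4 \<Rightarrow> 'a^4)"
proof (rule injI)
  fix c d :: "'a^6" assume "L0 c = L0 d"
  then have "\<And>X i. L0 c X $ i = L0 d X $ i" by simp
  from this[of "axis 2 1" 2] this[of "axis 3 1" 2] this[of "axis 4 1" 2]
    this[of "axis 2 1" 4] this[of "axis 3 1" 4] this[of "axis 4 1" 4]
  show "c = d" unfolding vec_eq_iff forall_6 by (simp add: L0_def axis_def)
qed

lemma L1_inj: "inj (L1 :: 'a::field^1 \<Rightarrow> 'a^4 \<Rightarrow> 'a^4)"
proof (rule injI)
  fix c d :: "'a^1" assume "L1 c = L1 d"
  then have "L1 c (axis 1 1) $ 2 = L1 d (axis 1 1) $ 2" by simp
  then show "c = d" unfolding vec_eq_iff by (simp add: L1_def axis_def)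
qed

lemma lin_iff4: "lin (D :: 'a::field^4 \<Rightarrow> 'a^4) \<longleftrightarrow>
   (\<forall>x y. D (x + y) = D x + D y) \<and> (\<forall>c x. D (c *s x) = c *s D x)"
  unfolding lin_def using Vector_Spaces.linear_iff[of "(*s)" "(*s)" D] vec.vector_space_axioms
  by blast

lemma derivs0:
  fixes t :: "'a::field_char_0"
  assumes "t \<noteq> 0" "t \<noteq> 1"
  shows "derivs t 1 0 (muA 0) = range L0"
proof
  show "derivs t 1 0 (muA 0) \<subseteq> range L0"
  proof
    fix D assume D: "D \<in> derivs t 1 0 (muA (0::'a))"
    have l: "lin D" and c: "\<And>X Y. t *s D (muA 0 X Y) = muA 0 (D X) Y" using D unfolding derivs_def by auto
    define M where "M i j = D (axis j 1) $ i" for i j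
    have DX: "D X $ i = X$1 * M i 1 + X$2 * M i 2 + X$3 * M i 3 + X$4 * M i 4" for X i
      unfolding M_def by (rule DX4[OF l])
    have "\<forall>a b i. (t *s D (muA 0 (axis a 1) (axis b 1)))$i = (muA 0 (D (axis a 1)) (axis b 1))$i"
      using c by simp
    then have E: "M 3 1 = 0 \<and> M 1 1 = 0 \<and> M 2 1 = 0 \<and> M 4 1 = 0 \<and> M 3 2 = 0 \<and> M 1 2 = 0 \<and>
       t * M 1 1 = M 3 3 \<and> M 1 3 = 0 \<and> M 3 4 = 0 \<and> M 1 4 = 0"
      unfolding forall_4 using assms by (auto simp: DX muA_def axis_def)
    define cc :: "'a^6" where "cc = (\<chi> k. if k = 1 then M 2 2 else if k = 2 then M 2 3 else if k = 3 then M 2 4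
       else if k = 4 then M 4 2 else if k = 5 then M 4 3 else M 4 4)"
    have "D = L0 cc"
      using E by (auto simp: fun_eq_iff vec_eq_iff forall_4 DX L0_def cc_def axis_def)
    then show "D \<in> range L0" by blast
  qed
next
  show "range L0 \<subseteq> derivs t 1 0 (muA 0)"
  proof (clarsimp simp: derivs_def)
    fix c :: "'a^6"
    show "lin (L0 c) \<and> (\<forall>X Y. t *s L0 c (muA 0 X Y) = muA 0 (L0 c X) Y)"
      unfolding lin_iff4
      by (auto simp: L0_def muA_def vec_eq_iff forall_4 axis_def algebra_simps)
  qed
qed

lemma derivst:
  fixes t :: "'a::field_char_0"
  assumes "t \<noteq> 0" "t \<noteq> 1"
  shows "derivs t 1 0 (muA t) = range L1"
proof
  show "derivs t 1 0 (muA t) \<subseteq> range L1"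
  proof
    fix D assume D: "D \<in> derivs t 1 0 (muA t)"
    have l: "lin D" and c: "\<And>X Y. t *s D (muA t X Y) = muA t (D X) Y" using D unfolding derivs_def by auto
    define M where "M i j = D (axis j 1) $ i" for i j
    have DX: "D X $ i = X$1 * M i 1 + X$2 * M i 2 + X$3 * M i 3 + X$4 * M i 4" for X i
      unfolding M_def by (rule DX4[OF l])
    have "\<forall>a b i. (t *s D (muA t (axis a 1) (axis b 1)))$i = (muA t (D (axis a 1)) (axis b 1))$i"
      using c by simp
    then have E: "M 3 1 = 0 \<and> M 4 1 = 0 \<and> M 1 1 = 0 \<and> M 1 2 = 0 \<and> M 2 2 = 0 \<and> M 3 2 = 0 \<and> M 4 2 = 0
       \<and> M 3 3 = 0 \<and> M 4 3 = M 2 1 \<and> M 1 3 = 0 \<and> M 2 3 = 0 \<and> M 3 4 = 0 \<and> M 4 4 = 0 \<and> M 1 4 = 0 \<and> M 2 4 = 0"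
      unfolding forall_4 using assms by (auto simp: DX muA_def axis_def)
    define cc :: "'a^1" where "cc = (\<chi> k. M 2 1)"
    have "D = L1 cc"
      using E by (auto simp: fun_eq_iff vec_eq_iff forall_4 DX L1_def cc_def axis_def)
    then show "D \<in> range L1" by blast
  qed
next
  show "range L1 \<subseteq> derivs t 1 0 (muA t)"
  proof (clarsimp simp: derivs_def)
    fix c :: "'a^1"
    show "lin (L1 c) \<and> (\<forall>X Y. t *s L1 c (muA t X Y) = muA t (L1 c X) Y)"
      unfolding lin_iff4
      by (auto simp: L1_def muA_def vec_eq_iff forall_4 axis_def algebra_simps)
  qed
qed

lemma derivs_other:
  fixes t :: "'a::field_char_0"
  assumes "t \<noteq> 0" "t \<noteq> 1" "s \<noteq> 0" "s \<noteq> t"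
  shows "derivs t 1 0 (muA s) = {0}"
proof
  show "derivs t 1 0 (muA s) \<subseteq> {0}"
  proof
    fix D assume D: "D \<in> derivs t 1 0 (muA s)"
    have l: "lin D" and c: "\<And>X Y. t *s D (muA s X Y) = muA s (D X) Y" using D unfolding derivs_def by auto
    define M where "M i j = D (axis j 1) $ i" for i j
    have DX: "D X $ i = X$1 * M i 1 + X$2 * M i 2 + X$3 * M i 3 + X$4 * M i 4" for X i
      unfolding M_def by (rule DX4[OF l])
    have "\<forall>a b i. (t *s D (muA s (axis a 1) (axis b 1)))$i = (muA s (D (axis a 1)) (axis b 1))$i"
      using c by simp
    then have E: "M 3 1 = 0 \<and> M 4 1 = 0 \<and> M 1 1 = 0 \<and> M 2 1 = 0 \<and> M 1 2 = 0 \<and> M 2 2 = 0 \<and> M 3 2 = 0 \<and> M 4 2 = 0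
       \<and> M 3 3 = 0 \<and> M 4 3 = 0 \<and> M 1 3 = 0 \<and> M 2 3 = 0 \<and> M 3 4 = 0 \<and> M 4 4 = 0 \<and> M 1 4 = 0 \<and> M 2 4 = 0"
      unfolding forall_4 using assms by (auto simp: DX muA_def axis_def)
    have "D = 0"
      using E by (auto simp: fun_eq_iff vec_eq_iff forall_4 DX)
    then show "D \<in> {0}" by blast
  qed
next
  show "{0} \<subseteq> derivs t 1 0 (muA s)"
    by (auto simp: derivs_def lin_iff4 muA_def)
qed

lemma phi_val:
  fixes s t :: "'a::field_char_0"
  assumes "t \<noteq> 0" and "t \<noteq> 1"
  shows "phi t (muA s) = (if s = 0 then 6 else if s = t then 1 else 0)"
proof -
  have z: "fvs.dim {0::'a^4 \<Rightarrow> 'a^4} = 0"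
    by (metis fvs.dim_eq_card_independent fvs.independent_empty card.empty fvs.dim_span fvs.span_insert_0)
  show ?thesis
    unfolding phi_def
    using derivs0[OF assms] derivst[OF assms] derivs_other[OF assms, of s]
      fdim_range[OF L0_lin L0_inj] fdim_range[OF L1_lin L1_inj] z
    by auto
qed

lemma muA_C2: "muA s \<in> C2"
  unfolding C2_def bilin_def lin_iff4
  by (auto simp: muA_def vec_eq_iff forall_4 axis_def algebra_simps)

theorem proposition2p1:
  fixes s t :: "'a::field_char_0"
  assumes "t \<noteq> 0" and "t \<noteq> 1"
  shows "phi t (muA s) = (if s = 0 then 6 else if s = t then 1 else 0)
    \<and> (\<forall>t1 t2 :: 'a. t1 \<notin> {0, 1} \<longrightarrow> t2 \<notin> {0, 1} \<longrightarrow>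
           ((\<forall>\<mu> \<in> (C2 :: ('a^4 \<Rightarrow> 'a^4 \<Rightarrow> 'a^4) set). phi t1 \<mu> = phi t2 \<mu>) \<longleftrightarrow> t1 = t2))"
proof (intro conjI allI impI)
  show "phi t (muA s) = (if s = 0 then 6 else if s = t then 1 else 0)"
    by (rule phi_val[OF assms])
next
  fix t1 t2 :: 'a
  assume h1: "t1 \<notin> {0, 1}" and h2: "t2 \<notin> {0, 1}"
  show "(\<forall>\<mu> \<in> (C2 :: ('a^4 \<Rightarrow> 'a^4 \<Rightarrow> 'a^4) set). phi t1 \<mu> = phi t2 \<mu>) \<longleftrightarrow> t1 = t2"
  proof
    assume A: "\<forall>\<mu> \<in> (C2 :: ('a^4 \<Rightarrow> 'a^4 \<Rightarrow> 'a^4) set). phi t1 \<mu> = phi t2 \<mu>"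
    show "t1 = t2"
    proof (rule ccontr)
      assume ne: "t1 \<noteq> t2"
      have "phi t1 (muA t1) = 1" using phi_val[of t1 t1] h1 by auto
      moreover have "phi t2 (muA t1) = 0" using phi_val[of t2 t1] h1 h2 ne by auto
      moreover have "phi t1 (muA t1) = phi t2 (muA t1)" using A muA_C2 by blast
      ultimately show False by simp
    qed
  qed simp
qed

end
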